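(* Assume $\mathrm{char}(\Bbbk)\ne2$. The set $\{M_\alpha\}_{\alpha\text{ even}}$ is a linear basis for the even subalgebra $\Pi_+$ of $(\mathcal{Q}\mathit{Sym},\zeta_{\mathcal Q})$.
   Context: $\mathcal{Q}\mathit{Sym}$ is the graded Hopf algebra of quasi-symmetric functions over $\Bbbk$ with basis $M_\alpha=\sum_{i_1<\cdots<i_k}x_{i_1}^{a_1}\cdots x_{i_k}^{a_k}$ for compositions $\alpha=(a_1,\dots,a_k)$ (degree $a_1+\cdots+a_k$; $M_{()}=1$), coproduct $\Delta(M_\alpha)=\sum_{\alpha=\beta\gamma}M_\beta\otimes M_\gamma$. $\zeta_{\mathcal Q}$ is the character with $\zeta_{\mathcal Q}(M_\alpha)=1$ if $\alpha=(n)$ or $()$, $0$ otherwise. $\bar\zeta_{\mathcal Q}(h)=(-1)^n\zeta_{\mathcal Q}(h)$ for $h$ of degree $n$. $\Pi_+$ is the largest graded subcoalgebra of $\mathcal{Q}\mathit{Sym}$ on which $\bar\zeta_{\mathcal Q}=\zeta_{\mathcal Q}$. A composition is even if all its parts are even (the empty composition counts as even). *)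

theory Defs
  imports Complex_Main "HOL-Library.Function_Algebras"
begin

text \<open>An element of QSym over the field 'a
  is represented by its coefficient function with respect to the monomial basis M.
  Elements of QSym (x) QSym are coefficient functions on pairs of compositions
  (w.r.t. the basis M_beta (x) M_gamma).\<close>

type_synonym 'a qsym = "nat list \<Rightarrow> 'a"

definition is_comp :: "nat list \<Rightarrow> bool" where
  "is_comp \<alpha> \<longleftrightarrow> (\<forall>a\<in>set \<alpha>. 0 < a)"

definition comp_even :: "nat list \<Rightarrow> bool" where
  "comp_even \<alpha> \<longleftrightarrow> (\<forall>a\<in>set \<alpha>. even a)"

definition QSym :: "'a::field qsym set" where
  "QSym = {f. finite {\<alpha>. f \<alpha> \<noteq> 0} \<and> (\<forall>\<alpha>. f \<alpha> \<noteq> 0 \<longrightarrow> is_comp \<alpha>)}"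

definition scl :: "'a::field \<Rightarrow> ('b \<Rightarrow> 'a) \<Rightarrow> ('b \<Rightarrow> 'a)" where
  "scl c f = (\<lambda>x. c * f x)"

definition Mqs :: "nat list \<Rightarrow> 'a::field qsym" where
  "Mqs \<alpha> = (\<lambda>\<beta>. if \<beta> = \<alpha> then 1 else 0)"

text \<open>coproduct: Delta(M_alpha) = sum over alpha = beta gamma of M_beta (x) M_gamma\<close>
definition Delta :: "'a::field qsym \<Rightarrow> (nat list \<times> nat list \<Rightarrow> 'a)" where
  "Delta f = (\<lambda>(\<beta>, \<gamma>). f (\<beta> @ \<gamma>))"

definition tensor :: "'a::field qsym \<Rightarrow> 'a qsym \<Rightarrow> (nat list \<times> nat list \<Rightarrow> 'a)" where
  "tensor g h = (\<lambda>(\<beta>, \<gamma>). g \<beta> * h \<gamma>)"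

definition homog_part :: "nat \<Rightarrow> 'a::field qsym \<Rightarrow> 'a qsym" where
  "homog_part n f = (\<lambda>\<alpha>. if sum_list \<alpha> = n then f \<alpha> else 0)"

definition zetaQ :: "'a::field qsym \<Rightarrow> 'a" where
  "zetaQ f = (\<Sum>\<alpha>\<in>{\<alpha>. f \<alpha> \<noteq> 0 \<and> length \<alpha> \<le> 1}. f \<alpha>)"

text \<open>bar zeta(h) = (-1)^n zeta(h) for h homogeneous of degree n; extended linearly\<close>
definition zetabarQ :: "'a::field qsym \<Rightarrow> 'a" where
  "zetabarQ f = (\<Sum>\<alpha>\<in>{\<alpha>. f \<alpha> \<noteq> 0 \<and> length \<alpha> \<le> 1}. (-1) ^ sum_list \<alpha> * f \<alpha>)"

definition graded_subcoalgebra :: "'a::field qsym set \<Rightarrow> bool" where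
  "graded_subcoalgebra C \<longleftrightarrow>
     C \<subseteq> QSym \<and> module.subspace scl C \<and>
     (\<forall>f\<in>C. Delta f \<in> module.span scl ((\<lambda>(g, h). tensor g h) ` (C \<times> C))) \<and>
     (\<forall>f\<in>C. \<forall>n. homog_part n f \<in> C)"

definition even_subcoalg_cond :: "'a::field qsym set \<Rightarrow> bool" where
  "even_subcoalg_cond C \<longleftrightarrow> graded_subcoalgebra C \<and> (\<forall>f\<in>C. zetabarQ f = zetaQ f)"

definition Pi_plus :: "'a::field qsym set" where
  "Pi_plus = (THE C. even_subcoalg_cond C \<and> (\<forall>D. even_subcoalg_cond D \<longrightarrow> D \<subseteq> C))"

end

theory Submission
  imports Defs
begin

lemma mod_scl: "module (scl :: 'a::field \<Rightarrow> ('b \<Rightarrow> 'a) \<Rightarrow> _)"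
  by unfold_locales (auto simp: scl_def fun_eq_iff algebra_simps)

lemma sum_fun_apply: "(sum f A) x = (\<Sum>a\<in>A. f a x)"
  by (induct A rule: infinite_finite_induct) auto

lemma scl_apply: "scl c f x = c * f x"
  by (simp add: scl_def)

definition EE :: "'a::field qsym set" where
  "EE = {f. f \<in> QSym \<and> (\<forall>\<alpha>. f \<alpha> \<noteq> 0 \<longrightarrow> comp_even \<alpha>)}"

lemma EE_subspace: "module.subspace scl (EE :: 'a::field qsym set)"
proof -
  interpret M: module "scl :: 'a \<Rightarrow> 'a qsym \<Rightarrow> _" by (rule mod_scl)
  show ?thesis
  proof (unfold M.subspace_def, intro conjI ballI allI)
    show "0 \<in> (EE :: 'a qsym set)" by (simp add: EE_def QSym_def)
  next
    fix x y :: "'a qsym" assume "x \<in> EE" "y \<in> EE"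
    then show "x + y \<in> EE"
      unfolding EE_def QSym_def
      by (auto intro: finite_subset[of _ "{\<alpha>. x \<alpha> \<noteq> 0} \<union> {\<alpha>. y \<alpha> \<noteq> 0}"];
          metis add.left_neutral add.right_neutral)
  next
    fix c and x :: "'a qsym" assume "x \<in> EE"
    then show "scl c x \<in> EE"
      unfolding EE_def QSym_def scl_def
      by (auto intro: finite_subset[of _ "{\<alpha>. x \<alpha> \<noteq> 0}"])
  qed
qed

lemma Mqs_apply: "Mqs \<alpha> \<beta> = (if \<beta> = \<alpha> then 1 else 0)"
  by (simp add: Mqs_def)

lemma Mqs_in_EE: "is_comp \<alpha> \<Longrightarrow> comp_even \<alpha> \<Longrightarrow> (Mqs \<alpha> :: 'a::field qsym) \<in> EE"
  unfolding EE_def QSym_def Mqs_def by auto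

lemma span_EE: "module.span scl (Mqs ` {\<alpha>. is_comp \<alpha> \<and> comp_even \<alpha>}) = (EE :: 'a::field qsym set)"
proof -
  interpret M: module "scl :: 'a \<Rightarrow> 'a qsym \<Rightarrow> _" by (rule mod_scl)
  show ?thesis
  proof
    show "M.span (Mqs ` {\<alpha>. is_comp \<alpha> \<and> comp_even \<alpha>}) \<subseteq> EE"
      by (rule M.span_minimal) (auto intro: Mqs_in_EE EE_subspace)
  next
    show "EE \<subseteq> M.span (Mqs ` {\<alpha>. is_comp \<alpha> \<and> comp_even \<alpha>})"
    proof
      fix f :: "'a qsym" assume f: "f \<in> EE"
      let ?S = "{\<alpha>. f \<alpha> \<noteq> 0}"
      have fin: "finite ?S" using f by (simp add: EE_def QSym_def)
      have eq: "f = (\<Sum>\<alpha>\<in>?S. scl (f \<alpha>) (Mqs \<alpha>))"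
      proof
        fix \<beta>
        have "(\<Sum>\<alpha>\<in>?S. scl (f \<alpha>) (Mqs \<alpha>)) \<beta> = (\<Sum>\<alpha>\<in>?S. if \<alpha> = \<beta> then f \<alpha> else 0)"
          unfolding sum_fun_apply scl_apply Mqs_apply by (rule sum.cong) auto
        also have "\<dots> = f \<beta>"
          using fin by (simp add: sum.delta')
        finally show "f \<beta> = (\<Sum>\<alpha>\<in>?S. scl (f \<alpha>) (Mqs \<alpha>)) \<beta>" by simp
      qed
      have "(\<Sum>\<alpha>\<in>?S. scl (f \<alpha>) (Mqs \<alpha>)) \<in> M.span (Mqs ` {\<alpha>. is_comp \<alpha> \<and> comp_even \<alpha>})"
      proof (rule M.span_sum)
        fix \<alpha> assume "\<alpha> \<in> ?S"
        then have "is_comp \<alpha> \<and> comp_even \<alpha>" using f by (auto simp: EE_def QSym_def)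
        then show "scl (f \<alpha>) (Mqs \<alpha>) \<in> M.span (Mqs ` {\<alpha>. is_comp \<alpha> \<and> comp_even \<alpha>})"
          by (intro M.span_scale M.span_base) auto
      qed
      then show "f \<in> M.span (Mqs ` {\<alpha>. is_comp \<alpha> \<and> comp_even \<alpha>})" using eq by metis
    qed
  qed
qed

lemma indep_Mqs: "\<not> module.dependent scl (Mqs ` {\<alpha>. is_comp \<alpha> \<and> comp_even \<alpha>} :: 'a::field qsym set)"
proof -
  interpret M: module "scl :: 'a \<Rightarrow> 'a qsym \<Rightarrow> _" by (rule mod_scl)
  show ?thesis
  proof (unfold M.dependent_explicit, clarify)
    fix t u v
    assume fin: "finite t" and sub: "t \<subseteq> Mqs ` {\<alpha>. is_comp \<alpha> \<and> comp_even \<alpha>}"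
      and s0: "(\<Sum>v\<in>t. scl (u v) v) = (0 :: 'a qsym)" and vt: "v \<in> t" and uv: "u v \<noteq> 0"
    obtain \<alpha> where v: "v = Mqs \<alpha>" using vt sub by auto
    have "(\<Sum>w\<in>t. scl (u w) w) \<alpha> = (\<Sum>w\<in>t. if w = v then u w else 0)"
      unfolding sum_fun_apply scl_apply
    proof (rule sum.cong[OF refl])
      fix w assume "w \<in> t"
      then obtain \<beta> where w: "w = Mqs \<beta>" using sub by auto
      show "u w * w \<alpha> = (if w = v then u w else 0)"
        using w v by (auto simp: Mqs_apply fun_eq_iff)
    qed
    also have "\<dots> = u v" using fin vt by (simp add: sum.delta')
    finally show False using s0 uv by simp
  qed
qed


lemma comp_even_sum: "comp_even \<alpha> \<Longrightarrow> even (sum_list \<alpha>)"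
  by (induct \<alpha>) (auto simp: comp_even_def)

lemma subspace_zero_at: "module.subspace scl {F :: 'b \<Rightarrow> 'a::field. F x = 0}"
proof -
  interpret M: module "scl :: 'a \<Rightarrow> ('b \<Rightarrow> 'a) \<Rightarrow> _" by (rule mod_scl)
  show ?thesis by (auto simp: M.subspace_def scl_apply)
qed

lemma Delta_EE:
  assumes f: "(f :: 'a::field qsym) \<in> EE"
  shows "Delta f \<in> module.span scl ((\<lambda>(g, h). tensor g h) ` (EE \<times> EE))"
proof -
  interpret M: module "scl :: 'a \<Rightarrow> (nat list \<times> nat list \<Rightarrow> 'a) \<Rightarrow> _" by (rule mod_scl)
  let ?supp = "{\<alpha>. f \<alpha> \<noteq> 0}"
  let ?S = "{p. f (fst p @ snd p) \<noteq> 0}"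
  have fin0: "finite ?supp" using f by (simp add: EE_def QSym_def)
  have "?S \<subseteq> (\<Union>\<alpha>\<in>?supp. (\<lambda>i. (take i \<alpha>, drop i \<alpha>)) ` {..length \<alpha>})"
  proof
    fix p assume "p \<in> ?S"
    then show "p \<in> (\<Union>\<alpha>\<in>?supp. (\<lambda>i. (take i \<alpha>, drop i \<alpha>)) ` {..length \<alpha>})"
      by (cases p) (auto intro!: bexI[of _ "fst p @ snd p"] image_eqI[of _ _ "length (fst p)"])
  qed
  then have fin: "finite ?S"
    by (rule finite_subset) (use fin0 in auto)
  have eq: "Delta f = (\<Sum>p\<in>?S. scl (f (fst p @ snd p)) (tensor (Mqs (fst p)) (Mqs (snd p))))"
  proof
    fix x :: "nat list \<times> nat list"
    obtain b c where x: "x = (b, c)" by (cases x)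
    have "(\<Sum>p\<in>?S. scl (f (fst p @ snd p)) (tensor (Mqs (fst p)) (Mqs (snd p)))) x
        = (\<Sum>p\<in>?S. if p = x then f (fst p @ snd p) else 0)"
      unfolding sum_fun_apply scl_apply
      by (rule sum.cong) (auto simp: x tensor_def Mqs_apply)
    also have "\<dots> = Delta f x"
      using fin by (auto simp: sum.delta' x Delta_def)
    finally show "Delta f x = (\<Sum>p\<in>?S. scl (f (fst p @ snd p)) (tensor (Mqs (fst p)) (Mqs (snd p)))) x"
      by simp
  qed
  have "(\<Sum>p\<in>?S. scl (f (fst p @ snd p)) (tensor (Mqs (fst p)) (Mqs (snd p))))
      \<in> M.span ((\<lambda>(g, h). tensor g h) ` (EE \<times> EE))"
  proof (rule M.span_sum)
    fix p assume "p \<in> ?S"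
    then have "is_comp (fst p @ snd p) \<and> comp_even (fst p @ snd p)"
      using f by (auto simp: EE_def QSym_def)
    then have "Mqs (fst p) \<in> (EE :: 'a qsym set)" "Mqs (snd p) \<in> (EE :: 'a qsym set)"
      by (auto intro!: Mqs_in_EE simp: is_comp_def comp_even_def)
    then show "scl (f (fst p @ snd p)) (tensor (Mqs (fst p)) (Mqs (snd p)))
      \<in> M.span ((\<lambda>(g, h). tensor g h) ` (EE \<times> EE))"
      by (intro M.span_scale M.span_base) force
  qed
  then show ?thesis using eq by metis
qed

lemma cond_EE: "even_subcoalg_cond (EE :: 'a::field qsym set)"
  unfolding even_subcoalg_cond_def graded_subcoalgebra_def
proof (intro conjI ballI allI)
  show "EE \<subseteq> (QSym :: 'a qsym set)" by (auto simp: EE_def)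
  show "module.subspace scl (EE :: 'a qsym set)" by (rule EE_subspace)
next
  fix f :: "'a qsym" assume "f \<in> EE"
  then show "Delta f \<in> module.span scl ((\<lambda>(g, h). tensor g h) ` (EE \<times> EE))" by (rule Delta_EE)
next
  fix f :: "'a qsym" and n assume f: "f \<in> EE"
  then show "homog_part n f \<in> EE"
    unfolding EE_def QSym_def homog_part_def
    by (auto intro: finite_subset[of _ "{\<alpha>. f \<alpha> \<noteq> 0}"])
next
  fix f :: "'a qsym" assume f: "f \<in> EE"
  show "zetabarQ f = zetaQ f"
    unfolding zetabarQ_def zetaQ_def
    by (rule sum.cong) (use f in \<open>auto simp: EE_def dest!: comp_even_sum\<close>)
qed

lemma odd_single_zero:
  assumes two: "(2::'a::field) \<noteq> 0" and D: "even_subcoalg_cond D" and f: "(f :: 'a qsym) \<in> D"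
    and n: "odd n"
  shows "f [n] = 0"
proof -
  let ?g = "homog_part n f"
  have g: "?g \<in> D" using D f by (auto simp: even_subcoalg_cond_def graded_subcoalgebra_def)
  have zz: "zetabarQ ?g = zetaQ ?g" using D g by (auto simp: even_subcoalg_cond_def)
  have sub: "{\<alpha>. ?g \<alpha> \<noteq> 0 \<and> length \<alpha> \<le> 1} \<subseteq> {[n]}"
  proof
    fix \<alpha> assume a: "\<alpha> \<in> {\<alpha>. ?g \<alpha> \<noteq> 0 \<and> length \<alpha> \<le> 1}"
    then have s: "sum_list \<alpha> = n" and l: "length \<alpha> \<le> 1"
      by (auto simp: homog_part_def split: if_splits)
    show "\<alpha> \<in> {[n]}"
    proof (cases \<alpha>)
      case Nil then show ?thesis using s n by simp
    next
      case (Cons x xs) then show ?thesis using s l by simp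
    qed
  qed
  have "zetaQ ?g = (\<Sum>\<alpha>\<in>{[n]}. ?g \<alpha>)"
    unfolding zetaQ_def
    by (rule sum.mono_neutral_left[OF _ sub]) auto
  then have z1: "zetaQ ?g = ?g [n]" by simp
  have "zetabarQ ?g = (\<Sum>\<alpha>\<in>{[n]}. (-1) ^ sum_list \<alpha> * ?g \<alpha>)"
    unfolding zetabarQ_def
    by (rule sum.mono_neutral_left[OF _ sub]) auto
  then have z2: "zetabarQ ?g = (-1) ^ n * ?g [n]" by simp
  have gn: "?g [n] = f [n]" by (simp add: homog_part_def)
  have "- f [n] = f [n]" using zz z1 z2 gn n by simp
  then have "2 * f [n] = 0" by (simp add: algebra_simps)
  then show ?thesis using two by simp
qed

lemma cond_sub:
  assumes two: "(2::'a::field) \<noteq> 0" and D: "even_subcoalg_cond (D :: 'a qsym set)"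
  shows "D \<subseteq> EE"
proof -
  interpret M: module "scl :: 'a \<Rightarrow> (nat list \<times> nat list \<Rightarrow> 'a) \<Rightarrow> _" by (rule mod_scl)
  have DQ: "D \<subseteq> QSym" and Dspan: "\<And>f. f \<in> D \<Longrightarrow> Delta f \<in> M.span ((\<lambda>(g, h). tensor g h) ` (D \<times> D))"
    using D by (auto simp: even_subcoalg_cond_def graded_subcoalgebra_def)
  have main: "\<forall>f\<in>D. f \<alpha> \<noteq> 0 \<longrightarrow> comp_even \<alpha>" for \<alpha>
  proof (induct \<alpha>)
    case Nil then show ?case by (simp add: comp_even_def)
  next
    case (Cons a \<gamma>)
    show ?case
    proof (intro ballI impI)
      fix f assume f: "f \<in> D" and fa: "f (a # \<gamma>) \<noteq> 0"
      have H: "\<not> ((\<forall>g\<in>D. g [a] = 0) \<or> (\<forall>h\<in>D. h \<gamma> = 0))"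
      proof
        assume H: "(\<forall>g\<in>D. g [a] = 0) \<or> (\<forall>h\<in>D. h \<gamma> = 0)"
        have "(\<lambda>(g, h). tensor g h) ` (D \<times> D) \<subseteq> {F. F ([a], \<gamma>) = 0}"
          using H by (auto simp: tensor_def)
        then have "M.span ((\<lambda>(g, h). tensor g h) ` (D \<times> D)) \<subseteq> {F. F ([a], \<gamma>) = 0}"
          by (rule M.span_minimal[OF _ subspace_zero_at])
        then have "Delta f ([a], \<gamma>) = 0" using Dspan[OF f] by auto
        then show False using fa by (simp add: Delta_def)
      qed
      then obtain g h where g: "g \<in> D" "g [a] \<noteq> 0" and h: "h \<in> D" "h \<gamma> \<noteq> 0" by blast
      have "even a" using odd_single_zero[OF two D g(1)] g(2) by blast
      moreover have "comp_even \<gamma>" using Cons h by blast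
      ultimately show "comp_even (a # \<gamma>)" by (simp add: comp_even_def)
    qed
  qed
  show ?thesis using DQ main by (auto simp: EE_def)
qed

lemma Pi_plus_EE:
  assumes two: "(2::'a::field) \<noteq> 0"
  shows "(Pi_plus :: 'a qsym set) = EE"
  unfolding Pi_plus_def
  apply (rule the_equality)
  apply (rule conjI)
  apply (rule cond_EE)
  apply (intro allI impI)
  apply (erule cond_sub[OF two])
  apply (rule equalityI)
   apply (erule conjE)
   apply (erule cond_sub[OF two])
  apply (erule conjE)
  apply (erule allE)
  apply (erule mp)
  apply (rule cond_EE)
  done

theorem proposition6p3:
  assumes "(2::'a::field) \<noteq> 0"
  shows "module.span scl (Mqs ` {\<alpha>. is_comp \<alpha> \<and> comp_even \<alpha>}) = (Pi_plus :: 'a qsym set)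
       \<and> \<not> module.dependent scl (Mqs ` {\<alpha>. is_comp \<alpha> \<and> comp_even \<alpha>} :: 'a qsym set)"
  using span_EE Pi_plus_EE[OF assms] indep_Mqs by auto

end
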